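(* Let $S$ be a nonempty set of graphs on $\Pi$. Then $\mathrm{eqdom}(S)$-set agreement is solvable in one round on the closed-above model generated by $\mathrm{Sym}(S)$.
   Context: Fix a set of $n$ processes $\Pi=\{p_1,\dots,p_n\}$. A graph is a directed graph with vertex set $\Pi$; every graph is assumed to contain all self-loops $(p,p)$. For a graph $G$ and $p\in\Pi$, $Out_G(p)=\{q:(p,q)\in E(G)\}$ and $In_G(p)=\{q:(q,p)\in E(G)\}$; for $P\subseteq\Pi$, $Out_G(P)=\bigcup_{p\in P}Out_G(p)$. Computation proceeds in failure-free, communication-closed rounds: in each round $r$ a graph $G_r$ is chosen and each process $p$ receives in round $r$ exactly the round-$r$ messages of the processes in $In_{G_r}(p)$. A communication model is a set of infinite sequences of graphs; an execution is allowed iff its sequence of round graphs belongs to the model. For a graph $G$, $\uparrow G=\{H: E(H)\supseteq E(G)\}$. The closed-above model generated by a set $S$ of graphs is $(\bigcup_{G\in S}\uparrow G)^\omega$. For a set $S$ of graphs, $\mathrm{Sym}(S)=\{\pi(G): G\in S,\ \pi:\Pi\to\Pi \text{ a permutation}\}$, where $\pi(G)$ has edges $\{(\pi(u),\pi(v)):(u,v)\in E(G)\}$. In $k$-set agreement each process starts with an input from a totally ordered set $V_{in}$ and must decide a value so that every decided value is the input of some process and at most $k$ distinct values are decided; it is solvable in $r$ rounds on a model if some algorithm guarantees this, with all processes deciding after $r$ rounds, in every allowed execution and for every input assignment. For a graph $G$, $\mathrm{eqdom}(G)=\min\{i\in[1,n]: \forall P\subseteq\Pi,\ |P|=i\Rightarrow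 Out_G(P)=\Pi\}$, and $\mathrm{eqdom}(S)=\max_{G\in S}\mathrm{eqdom}(G)$. *)

theory Defs
  imports Main
begin

text \<open>Processes are the elements of a finite type 'p (so n = CARD('p)).
  A graph is its edge set, a relation on 'p containing all self-loops.\<close>

type_synonym 'p graph = "('p \<times> 'p) set"

definition is_graph :: "'p graph \<Rightarrow> bool" where
  "is_graph G \<longleftrightarrow> Id \<subseteq> G"

definition Out :: "'p graph \<Rightarrow> 'p \<Rightarrow> 'p set" where
  "Out G p = {q. (p, q) \<in> G}"

definition In :: "'p graph \<Rightarrow> 'p \<Rightarrow> 'p set" where
  "In G p = {q. (q, p) \<in> G}"

definition OutSet :: "'p graph \<Rightarrow> 'p set \<Rightarrow> 'p set" where
  "OutSet G P = (\<Union>p\<in>P. Out G p)"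

definition up :: "'p graph \<Rightarrow> 'p graph set" where
  "up G = {H. is_graph H \<and> G \<subseteq> H}"

definition closed_above_model :: "'p graph set \<Rightarrow> (nat \<Rightarrow> 'p graph) set" where
  "closed_above_model S = {seq. \<forall>r. seq r \<in> (\<Union>G\<in>S. up G)}"

definition perm_graph :: "('p \<Rightarrow> 'p) \<Rightarrow> 'p graph \<Rightarrow> 'p graph" where
  "perm_graph \<pi> G = (\<lambda>(u, v). (\<pi> u, \<pi> v)) ` G"

definition Sym :: "'p graph set \<Rightarrow> 'p graph set" where
  "Sym S = {perm_graph \<pi> G | \<pi> G. G \<in> S \<and> bij \<pi>}"

definition eqdom_graph :: "'p::finite graph \<Rightarrow> nat" where
  "eqdom_graph G = (LEAST i. 1 \<le> i \<and> i \<le> card (UNIV :: 'p set) \<and>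
      (\<forall>P::'p set. card P = i \<longrightarrow> OutSet G P = UNIV))"

definition eqdom :: "'p::finite graph set \<Rightarrow> nat" where
  "eqdom S = Max (eqdom_graph ` S)"

text \<open>One-round (full-information) algorithms: each process broadcasts its input
  in round 1; after round 1 process p has received exactly the inputs of the
  processes in In G p, represented as a partial map, and decides via dec.\<close>
definition view :: "'p graph \<Rightarrow> ('p \<Rightarrow> 'v) \<Rightarrow> 'p \<Rightarrow> ('p \<Rightarrow> 'v option)" where
  "view G x p = (\<lambda>q. if q \<in> In G p then Some (x q) else None)"

definition solves_kset_one_round ::
  "nat \<Rightarrow> (nat \<Rightarrow> 'p graph) set \<Rightarrow> ('p \<Rightarrow> ('p \<Rightarrow> 'v option) \<Rightarrow> 'v) \<Rightarrow> bool" where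
  "solves_kset_one_round k M dec \<longleftrightarrow>
     (\<forall>seq\<in>M. \<forall>x :: 'p \<Rightarrow> 'v.
        (\<forall>p. dec p (view (seq 0) x p) \<in> range x) \<and>
        card (range (\<lambda>p. dec p (view (seq 0) x p))) \<le> k)"

definition kset_solvable_one_round ::
  "nat \<Rightarrow> (nat \<Rightarrow> 'p graph) set \<Rightarrow> 'v itself \<Rightarrow> bool" where
  "kset_solvable_one_round k M _ \<longleftrightarrow>
     (\<exists>dec :: 'p \<Rightarrow> ('p \<Rightarrow> 'v option) \<Rightarrow> 'v. solves_kset_one_round k M dec)"

end

theory Submission
  imports Defs
begin

lemma eqdom_graph_prop:
  fixes G :: "'p::finite graph"
  assumes "is_graph G"
  shows "1 \<le> eqdom_graph G \<and> eqdom_graph G \<le> card (UNIV::'p set) \<and>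
    (\<forall>P::'p set. card P = eqdom_graph G \<longrightarrow> OutSet G P = UNIV)"
  unfolding eqdom_graph_def
proof (rule LeastI[where k = "card (UNIV::'p set)"], intro conjI allI impI)
  show "1 \<le> card (UNIV::'p set)" proof -
    have "0 < card (UNIV::'p set)" by (simp add: card_gt_0_iff)
    then show ?thesis by simp
  qed
  show "card (UNIV::'p set) \<le> card (UNIV::'p set)" by simp
  fix P :: "'p set" assume "card P = card (UNIV::'p set)"
  then have "P = UNIV" by (metis card_subset_eq finite_UNIV subset_UNIV)
  then show "OutSet G P = UNIV" using assms
    by (auto simp: OutSet_def Out_def is_graph_def)
qed

lemma dom_perm:
  fixes G :: "'p::finite graph"
  assumes "is_graph G" "bij \<pi>" "perm_graph \<pi> G \<subseteq> H"
    and "eqdom_graph G \<le> card P"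
  shows "OutSet H P = UNIV"
proof -
  obtain P' where P': "P' \<subseteq> P" "card P' = eqdom_graph G"
    using assms(4) obtain_subset_with_card_n by metis
  have inj: "inj (inv \<pi>)" using assms(2) bij_imp_bij_inv bij_is_inj by blast
  have "card (inv \<pi> ` P') = eqdom_graph G" using P' card_image inj
    by (metis inj_on_subset subset_UNIV)
  then have dom: "OutSet G (inv \<pi> ` P') = UNIV" using eqdom_graph_prop[OF assms(1)] by blast
  show ?thesis
  proof (rule set_eqI, simp)
    fix q
    have "inv \<pi> q \<in> OutSet G (inv \<pi> ` P')" using dom by simp
    then obtain p where p: "p \<in> P'" "(inv \<pi> p, inv \<pi> q) \<in> G"
      by (auto simp: OutSet_def Out_def)
    then have "(\<pi> (inv \<pi> p), \<pi> (inv \<pi> q)) \<in> perm_graph \<pi> G"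
      unfolding perm_graph_def by force
    then have "(p, q) \<in> H" using assms(2,3) by (metis bij_inv_eq_iff subsetD)
    then show "q \<in> OutSet H P" using p P' by (auto simp: OutSet_def Out_def)
  qed
qed

lemma view_vals: "{a. \<exists>q. view H x p q = Some a} = x ` In H p"
  by (auto simp: view_def split: if_splits)

theorem mainTheorem3:
  fixes S :: "'p::finite graph set"
  assumes "S \<noteq> {}"
    and "\<forall>G\<in>S. is_graph G"
  shows "kset_solvable_one_round (eqdom S) (closed_above_model (Sym S)) TYPE('v::linorder)"
  unfolding kset_solvable_one_round_def
proof (rule exI[where x = "\<lambda>p v. Min {a. \<exists>q. v q = Some a}"],
       unfold solves_kset_one_round_def, intro ballI allI conjI)
  fix seq and x :: "'p \<Rightarrow> 'v"
  assume "seq \<in> closed_above_model (Sym S)"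
  then obtain G \<pi> where G: "G \<in> S" "bij \<pi>" "seq 0 \<in> up (perm_graph \<pi> G)"
  proof -
    assume h: "\<And>G \<pi>. G \<in> S \<Longrightarrow> bij \<pi> \<Longrightarrow> seq 0 \<in> up (perm_graph \<pi> G) \<Longrightarrow> thesis"
    from \<open>seq \<in> closed_above_model (Sym S)\<close> have "seq 0 \<in> (\<Union>G\<in>Sym S. up G)"
      by (simp add: closed_above_model_def)
    then show thesis using h by (auto simp: Sym_def)
  qed
  define H where "H = seq 0"
  have isH: "is_graph H" and sub: "perm_graph \<pi> G \<subseteq> H" using G H_def by (auto simp: up_def)
  have inp: "p \<in> In H p" for p using isH by (auto simp: In_def is_graph_def)
  define d where "d p = Min (x ` In H p)" for p
  have dec: "Min {a. \<exists>q. view (seq 0) x p q = Some a} = d p" for p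
    by (simp add: view_vals H_def d_def)
  have dmem: "d p \<in> x ` In H p" for p
    unfolding d_def using inp by (intro Min_in) auto
  show "Min {a. \<exists>q. view (seq 0) x p q = Some a} \<in> range x" for p
    using dmem[of p] dec[of p] by auto
  have finS: "finite S" by (rule finite_subset[OF subset_UNIV]) simp
  have jle: "eqdom_graph G \<le> eqdom S"
    unfolding eqdom_def using finS G(1) by simp
  show "card (range (\<lambda>p. Min {a. \<exists>q. view (seq 0) x p q = Some a})) \<le> eqdom S"
  proof (rule ccontr)
    define D where "D = range d"
    assume "\<not> ?thesis"
    then have cD: "card D > eqdom S" using dec unfolding D_def by simp
    have finD: "finite D" unfolding D_def by simp
    have "D \<noteq> {}" unfolding D_def by simp
    define m where "m = Max D"
    have mD: "m \<in> D" using finD \<open>D \<noteq> {}\<close> m_def by simp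
    have "card (D - {m}) \<ge> eqdom S" using cD mD finD by simp
    then obtain D0 where D0: "D0 \<subseteq> D - {m}" "card D0 = eqdom S"
      by (metis obtain_subset_with_card_n)
    have "D0 \<subseteq> range x" using D0 dmem unfolding D_def by blast
    define P where "P = inv x ` D0"
    have "inj_on (inv x) D0" using \<open>D0 \<subseteq> range x\<close>
      by (metis inj_on_inv_into)
    then have cP: "card P = eqdom S" using D0 P_def card_image by metis
    have xP: "x p < m" if pP: "p \<in> P" for p
    proof -
      obtain a where a: "a \<in> D0" "p = inv x a" using pP unfolding P_def by blast
      then have "x p = a" using \<open>D0 \<subseteq> range x\<close> by (auto simp: f_inv_into_f)
      moreover have "a \<le> m" "a \<noteq> m" using a D0 finD m_def by auto
      ultimately show ?thesis by simp
    qed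
    have out: "OutSet H P = UNIV"
      using dom_perm[OF _ G(2) sub] assms(2) G(1) jle cP by simp
    obtain q where q: "d q = m" using mD D_def by auto
    have "q \<in> OutSet H P" using out by simp
    then obtain p where p: "p \<in> P" "(p, q) \<in> H" by (auto simp: OutSet_def Out_def)
    then have "d q \<le> x p" unfolding d_def by (intro Min_le) (auto simp: In_def)
    then show False using xP[OF p(1)] q by simp
  qed
qed

end
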